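(* For all positive rationals $p<q<1$, $p\text{-}\mathsf{WWKL}\nleq_{\mathrm{W}} q\text{-}\mathsf{WWKL}$.
   Context: For a positive rational $q<1$, $q\text{-}\mathsf{WWKL}$ is the problem whose instances are subtrees $T$ of $2^{<\omega}$ with $|\{\sigma\in 2^n:\sigma\in T\}|/2^n\geq q$ for all $n$, and whose solutions are the infinite paths through $T$. $\mathsf{P}\leq_{\mathrm{W}}\mathsf{Q}$ means there are Turing functionals $\Phi,\Psi$ such that for every instance $A$ of $\mathsf{P}$, $\Phi(A)$ is an instance of $\mathsf{Q}$, and for every solution $T$ to $\Phi(A)$, $\Psi(A\oplus T)$ is a solution to $A$. *)

theory Defs
  imports Complex_Main
begin

datatype recf = Zero | Succ | Proj nat | Comp recf "recf list" | Prec recf recf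
  | Mu recf | Orc

inductive eval :: "(nat \<Rightarrow> nat) \<Rightarrow> recf \<Rightarrow> nat list \<Rightarrow> nat \<Rightarrow> bool" for X where
  eval_Zero: "eval X Zero xs 0"
| eval_Succ: "eval X Succ (x # xs) (Suc x)"
| eval_Proj: "i < length xs \<Longrightarrow> eval X (Proj i) xs (xs ! i)"
| eval_Orc: "eval X Orc (x # xs) (X x)"
| eval_Comp: "list_all2 (\<lambda>g y. eval X g xs y) gs ys \<Longrightarrow> eval X f ys z \<Longrightarrow> eval X (Comp f gs) xs z"
| eval_Prec0: "eval X f xs y \<Longrightarrow> eval X (Prec f g) (0 # xs) y"
| eval_PrecS: "eval X (Prec f g) (n # xs) y \<Longrightarrow> eval X g (n # y # xs) z
     \<Longrightarrow> eval X (Prec f g) (Suc n # xs) z"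
| eval_Mu: "eval X f (n # xs) 0 \<Longrightarrow> (\<forall>m<n. \<exists>y. 0 < y \<and> eval X f (m # xs) y)
     \<Longrightarrow> eval X (Mu f) xs n"

definition computes :: "recf \<Rightarrow> (nat \<Rightarrow> nat) \<Rightarrow> (nat \<Rightarrow> nat) \<Rightarrow> bool" where
  "computes e X g \<longleftrightarrow> (\<forall>n. eval X e [n] (g n))"

definition join :: "(nat \<Rightarrow> nat) \<Rightarrow> (nat \<Rightarrow> nat) \<Rightarrow> (nat \<Rightarrow> nat)" where
  "join A B = (\<lambda>n. if even n then A (n div 2) else B (n div 2))"

text \<open>A problem: set of (codes of) instances, and for each instance its set of (codes of) solutions.\<close>
type_synonym problem = "(nat \<Rightarrow> nat) set \<times> ((nat \<Rightarrow> nat) \<Rightarrow> (nat \<Rightarrow> nat) set)"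

definition weihrauch_le :: "problem \<Rightarrow> problem \<Rightarrow> bool" where
  "weihrauch_le P Q \<longleftrightarrow> (\<exists>\<Phi> \<Psi>. \<forall>A \<in> fst P. \<exists>B. computes \<Phi> A B \<and> B \<in> fst Q \<and>
      (\<forall>T \<in> snd Q B. \<exists>C. computes \<Psi> (join A T) C \<and> C \<in> snd P A))"

text \<open>Bijective coding of binary strings by natural numbers (bijective base 2).\<close>
primrec str_code :: "bool list \<Rightarrow> nat" where
  "str_code [] = 0"
| "str_code (b # s) = 2 * str_code s + (if b then 2 else 1)"

definition is_tree :: "bool list set \<Rightarrow> bool" where
  "is_tree T \<longleftrightarrow> (\<forall>s t. s @ t \<in> T \<longrightarrow> s \<in> T)"

definition is_path :: "bool list set \<Rightarrow> (nat \<Rightarrow> bool) \<Rightarrow> bool" where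
  "is_path T f \<longleftrightarrow> (\<forall>n. map f [0..<n] \<in> T)"

definition tree_oracle :: "bool list set \<Rightarrow> nat \<Rightarrow> nat" where
  "tree_oracle T = (\<lambda>n. if \<exists>s\<in>T. n = str_code s then 1 else 0)"

definition path_oracle :: "(nat \<Rightarrow> bool) \<Rightarrow> nat \<Rightarrow> nat" where
  "path_oracle f = (\<lambda>n. if f n then 1 else 0)"

definition wwkl_tree :: "rat \<Rightarrow> bool list set \<Rightarrow> bool" where
  "wwkl_tree q T \<longleftrightarrow> is_tree T \<and>
     (\<forall>n. q \<le> of_nat (card {s \<in> T. length s = n}) / 2 ^ n)"

definition qWWKL :: "rat \<Rightarrow> problem" where
  "qWWKL q = ({tree_oracle T | T. wwkl_tree q T},
     \<lambda>X. {path_oracle f | f T. X = tree_oracle T \<and> wwkl_tree q T \<and> is_path T f})"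

end

theory Submission
  imports Defs
begin


definition good_bound :: "(nat \<Rightarrow> nat) \<Rightarrow> recf \<Rightarrow> nat list \<Rightarrow> nat \<Rightarrow> nat \<Rightarrow> bool" where
  "good_bound X e xs y N \<longleftrightarrow> (\<forall>X'. (\<forall>i<N. X' i = X i) \<longrightarrow> eval X' e xs y)"

lemma good_bound_mono: "good_bound X e xs y N \<Longrightarrow> N \<le> M \<Longrightarrow> good_bound X e xs y M"
  unfolding good_bound_def by auto

lemma list_bound:
  assumes "list_all2 (\<lambda>g y. eval X g xs y \<and> (\<exists>N. good_bound X g xs y N)) gs ys"
  shows "\<exists>N. \<forall>X'. (\<forall>i<N. X' i = X i) \<longrightarrow> list_all2 (\<lambda>g y. eval X' g xs y) gs ys"
  using assms
proof (induction gs ys rule: list_all2_induct)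
  case Nil
  then show ?case by auto
next
  case (Cons g gs y ys)
  then obtain N1 where N1: "good_bound X g xs y N1" by auto
  from Cons obtain N2 where N2: "\<forall>X'. (\<forall>i<N2. X' i = X i) \<longrightarrow> list_all2 (\<lambda>g y. eval X' g xs y) gs ys" by auto
  show ?case
  proof (intro exI allI impI)
    fix X' assume a: "\<forall>i<max N1 N2. X' i = X i"
    have "eval X' g xs y" using N1 a unfolding good_bound_def by auto
    moreover have "list_all2 (\<lambda>g y. eval X' g xs y) gs ys" using N2 a by auto
    ultimately show "list_all2 (\<lambda>g y. eval X' g xs y) (g # gs) (y # ys)" by auto
  qed
qed

lemma fin_bound:
  fixes n :: nat and P :: "nat \<Rightarrow> nat \<Rightarrow> bool"
  assumes "\<forall>m<n. \<exists>N. P m N" and "\<And>m N M. P m N \<Longrightarrow> N \<le> M \<Longrightarrow> P m M"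
  shows "\<exists>N. \<forall>m<n. P m N"
  using assms(1)
proof (induction n)
  case 0 then show ?case by auto
next
  case (Suc n)
  then obtain N1 where N1: "\<forall>m<n. P m N1" by auto
  from Suc.prems obtain N2 where N2: "P n N2" by auto
  have "\<forall>m<Suc n. P m (max N1 N2)"
  proof (intro allI impI)
    fix m assume "m < Suc n"
    then have "m < n \<or> m = n" by auto
    then show "P m (max N1 N2)"
    proof
      assume "m < n" then have h: "P m N1" using N1 by simp
      show ?thesis by (rule assms(2)[OF h max.cobounded1])
    next
      assume "m = n" then show ?thesis using assms(2)[OF N2 max.cobounded2[of N2 N1]] by simp
    qed
  qed
  then show ?case by blast
qed

lemma eval_use: "eval X e xs y \<Longrightarrow> \<exists>N. good_bound X e xs y N"
proof (induction rule: eval.induct)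
  case (eval_Zero xs)
  then show ?case unfolding good_bound_def by (auto intro: eval.intros)
next
  case (eval_Succ x xs)
  then show ?case unfolding good_bound_def by (auto intro: eval.intros)
next
  case (eval_Proj i xs)
  then show ?case unfolding good_bound_def by (auto intro: eval.intros)
next
  case (eval_Orc x xs)
  show ?case unfolding good_bound_def
  proof (intro exI allI impI)
    fix X' assume "\<forall>i<Suc x. X' i = X i"
    then have "X' x = X x" by auto
    then show "eval X' Orc (x # xs) (X x)" by (metis eval.eval_Orc)
  qed
next
  case (eval_Comp xs gs ys f z)
  from list_bound[OF eval_Comp.IH(1)] obtain N1 where
    N1: "\<forall>X'. (\<forall>i<N1. X' i = X i) \<longrightarrow> list_all2 (\<lambda>g y. eval X' g xs y) gs ys" by auto
  from eval_Comp obtain N2 where N2: "good_bound X f ys z N2" by auto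
  show ?case unfolding good_bound_def
  proof (intro exI allI impI)
    fix X' assume a: "\<forall>i<max N1 N2. X' i = X i"
    have "list_all2 (\<lambda>g. eval X' g xs) gs ys" using N1 a by auto
    moreover have "eval X' f ys z" using N2 a unfolding good_bound_def by auto
    ultimately show "eval X' (Comp f gs) xs z" by (rule eval.eval_Comp)
  qed
next
  case (eval_Prec0 f xs y g)
  then show ?case unfolding good_bound_def by (auto intro: eval.intros)
next
  case (eval_PrecS f g n xs y z)
  then obtain N1 N2 where "good_bound X (Prec f g) (n # xs) y N1" "good_bound X g (n # y # xs) z N2"
    by auto
  then have "good_bound X (Prec f g) (Suc n # xs) z (max N1 N2)" unfolding good_bound_def
  proof (intro allI impI)
    fix X' assume h: "\<forall>X'. (\<forall>i<N1. X' i = X i) \<longrightarrow> eval X' (Prec f g) (n # xs) y"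
      "\<forall>X'. (\<forall>i<N2. X' i = X i) \<longrightarrow> eval X' g (n # y # xs) z" "\<forall>i<max N1 N2. X' i = X i"
    then have "eval X' (Prec f g) (n # xs) y" "eval X' g (n # y # xs) z" by auto
    then show "eval X' (Prec f g) (Suc n # xs) z" by (rule eval.eval_PrecS)
  qed
  then show ?case by blast
next
  case (eval_Mu f n xs)
  obtain N1 where N1: "good_bound X f (n # xs) 0 N1" using eval_Mu by auto
  have "\<forall>m<n. \<exists>N. \<exists>y>0. good_bound X f (m # xs) y N" using eval_Mu(3) by blast
  then have "\<forall>m<n. \<exists>N. \<exists>y>0. good_bound X f (m # xs) y N" by blast
  moreover have "\<And>m N M. (\<exists>y>0. good_bound X f (m # xs) y N) \<Longrightarrow> N \<le> M \<Longrightarrow> (\<exists>y>0. good_bound X f (m # xs) y M)"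
    using good_bound_mono by blast
  ultimately obtain N2 where N2: "\<forall>m<n. \<exists>y>0. good_bound X f (m # xs) y N2"
    using fin_bound[of n "\<lambda>m N. \<exists>y>0. good_bound X f (m # xs) y N"] by presburger
  have "good_bound X (Mu f) xs n (max N1 N2)" unfolding good_bound_def
  proof (intro allI impI)
    fix X' assume a: "\<forall>i<max N1 N2. X' i = X i"
    have "\<forall>i<N1. X' i = X i" using a by simp
    then have "eval X' f (n # xs) 0" using N1 unfolding good_bound_def by blast
    moreover have "\<forall>m<n. \<exists>y>0. eval X' f (m # xs) y"
    proof (intro allI impI)
      fix m assume "m < n"
      then obtain y where "y > 0" "good_bound X f (m # xs) y N2" using N2 by blast
      moreover have "\<forall>i<N2. X' i = X i" using a by simp
      ultimately show "\<exists>y>0. eval X' f (m # xs) y" unfolding good_bound_def by blast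
    qed
    ultimately show "eval X' (Mu f) xs n" by (rule eval.eval_Mu)
  qed
  then show ?case by blast
qed


inductive_cases ZeroE: "eval X Zero xs y"
inductive_cases SuccE: "eval X Succ xs y"
inductive_cases ProjE: "eval X (Proj i) xs y"
inductive_cases OrcE: "eval X Orc xs y"
inductive_cases CompE: "eval X (Comp f gs) xs y"
inductive_cases PrecE: "eval X (Prec f g) xs y"
inductive_cases MuE: "eval X (Mu f) xs y"

lemma eval_det: "eval X e xs y \<Longrightarrow> eval X e xs y' \<Longrightarrow> y' = y"
proof (induction arbitrary: y' rule: eval.induct)
  case (eval_Comp xs gs ys f z)
  from eval_Comp.prems obtain ys' where a: "list_all2 (\<lambda>g. eval X g xs) gs ys'" "eval X f ys' y'"
    by (rule CompE)
  have "ys' = ys" using eval_Comp.IH(1) a(1)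
  proof (induction gs ys arbitrary: ys' rule: list_all2_induct)
    case Nil then show ?case by simp
  next
    case (Cons g gs y ys)
    then show ?case by (cases ys') auto
  qed
  then show ?case using eval_Comp.IH(2) a(2) by blast
next
  case (eval_Mu f n xs)
  from eval_Mu.prems have b: "eval X f (y' # xs) 0" "\<forall>m<y'. \<exists>y>0. eval X f (m # xs) y"
    by (rule MuE, blast)+
  show ?case
  proof (rule linorder_cases[of y' n])
    assume "y' < n"
    then obtain y where "y > 0" "eval X f (y' # xs) y" "\<forall>z. eval X f (y' # xs) z \<longrightarrow> z = y"
      using eval_Mu.IH(2) by blast
    then have "0 = y" using b(1) by blast
    then show ?thesis using \<open>y > 0\<close> by simp
  next
    assume "n < y'"
    then obtain y where "y > 0" "eval X f (n # xs) y" using b(2) by blast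
    then have "y = 0" using eval_Mu.IH(1) by blast
    then show ?thesis using \<open>y > 0\<close> by simp
  qed
next
  case (eval_Zero xs) from eval_Zero.prems show ?case by (rule ZeroE) simp
next
  case (eval_Succ x xs) from eval_Succ.prems show ?case by (rule SuccE) simp
next
  case (eval_Proj i xs) from eval_Proj.prems show ?case by (rule ProjE) simp
next
  case (eval_Orc x xs) from eval_Orc.prems show ?case by (rule OrcE) simp
next
  case (eval_Prec0 f xs y g) from eval_Prec0.prems show ?case
    by (rule PrecE) (use eval_Prec0.IH in simp_all)
next
  case (eval_PrecS f g n xs y z)
  from eval_PrecS.prems obtain y2 where h: "eval X (Prec f g) (n # xs) y2" "eval X g (n # y2 # xs) y'"
    by (rule PrecE) simp_all
  have "y2 = y" by (rule eval_PrecS.IH(1)[OF h(1)])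
  then have "eval X g (n # y # xs) y'" using h(2) by simp
  then show ?case by (rule eval_PrecS.IH(2))
qed



section \<open>Koenig\<close>

definition kgood :: "bool list set \<Rightarrow> bool list \<Rightarrow> bool" where
  "kgood U s \<longleftrightarrow> (\<forall>N\<ge>length s. \<exists>t\<in>U. length t = N \<and> take (length s) t = s)"

primrec kpre :: "bool list set \<Rightarrow> nat \<Rightarrow> bool list" where
  "kpre U 0 = []"
| "kpre U (Suc n) = kpre U n @ [kgood U (kpre U n @ [True])]"

lemma tree_take: "is_tree U \<Longrightarrow> t \<in> U \<Longrightarrow> take k t \<in> U"
  unfolding is_tree_def by (metis append_take_drop_id)

lemma kgood_step:
  assumes U: "is_tree U" and g: "kgood U s"
  shows "kgood U (s @ [True]) \<or> kgood U (s @ [False])"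
proof (rule ccontr)
  assume "\<not> ?thesis"
  then have n1: "\<not> kgood U (s @ [True])" and n2: "\<not> kgood U (s @ [False])" by auto
  from n1 obtain N1 where N1: "N1 \<ge> Suc (length s)" "\<forall>t\<in>U. length t = N1 \<longrightarrow> take (Suc (length s)) t \<noteq> s @ [True]"
    unfolding kgood_def by auto
  from n2 obtain N2 where N2: "N2 \<ge> Suc (length s)" "\<forall>t\<in>U. length t = N2 \<longrightarrow> take (Suc (length s)) t \<noteq> s @ [False]"
    unfolding kgood_def by auto
  let ?N = "max N1 N2"
  have "?N \<ge> length s" using N1(1) by linarith
  then obtain t where t: "t \<in> U" "length t = ?N" "take (length s) t = s"
    using g unfolding kgood_def by blast
  have ls: "length s < length t" using t N1 by auto
  have tk: "take (Suc (length s)) t = s @ [t ! length s]"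
    using ls t(3) by (simp add: take_Suc_conv_app_nth)
  show False
  proof (cases "t ! length s")
    case True
    have "take N1 t \<in> U" by (rule tree_take[OF U t(1)])
    moreover have "length (take N1 t) = N1" using t(2) by simp
    moreover have "take (Suc (length s)) (take N1 t) = s @ [True]"
      using tk True N1(1) by (simp add: min_def)
    ultimately show False using N1(2) by blast
  next
    case False
    have "take N2 t \<in> U" by (rule tree_take[OF U t(1)])
    moreover have "length (take N2 t) = N2" using t(2) by simp
    moreover have "take (Suc (length s)) (take N2 t) = s @ [False]"
      using tk False N2(1) by (simp add: min_def)
    ultimately show False using N2(2) by blast
  qed
qed

lemma kpre_props:
  assumes U: "is_tree U" and all: "\<forall>N. \<exists>s\<in>U. length s = N"
  shows "kgood U (kpre U n) \<and> length (kpre U n) = n"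
proof (induction n)
  case 0
  have "kgood U []" unfolding kgood_def using all by auto
  then show ?case by simp
next
  case (Suc n)
  then have "kgood U (kpre U n @ [kgood U (kpre U n @ [True])])"
    using kgood_step[OF U] by (cases "kgood U (kpre U n @ [True])") auto
  then show ?case using Suc by simp
qed

lemma kgood_mem: "kgood U s \<Longrightarrow> s \<in> U"
  unfolding kgood_def by (metis order_refl take_all)

lemma koenig:
  assumes U: "is_tree U" and all: "\<forall>N. \<exists>s\<in>U. length s = N"
  shows "\<exists>f. is_path U f"
proof -
  define f where "f n = kpre U (Suc n) ! n" for n
  have "map f [0..<n] = kpre U n" for n
  proof (induction n)
    case 0 then show ?case by simp
  next
    case (Suc n)
    have "length (kpre U n) = n" using kpre_props[OF U all] by blast
    then have "f n = kgood U (kpre U n @ [True])" unfolding f_def by (simp add: nth_append)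
    then show ?case using Suc by simp
  qed
  then have "is_path U f" unfolding is_path_def using kpre_props[OF U all] kgood_mem by metis
  then show ?thesis by blast
qed

section \<open>Codes\<close>

lemma str_code_inj: "str_code s = str_code t \<Longrightarrow> s = t"
proof (induction s arbitrary: t)
  case Nil then show ?case by (cases t) (auto split: if_splits)
next
  case (Cons a s)
  then show ?case
  proof (cases t)
    case Nil then show ?thesis using Cons by (simp split: if_splits)
  next
    case (Cons b t')
    have e: "2 * str_code s + (if a then 2 else 1) = 2 * str_code t' + (if b then (2::nat) else 1)"
      using \<open>str_code (a # s) = str_code t\<close> \<open>t = b # t'\<close> by simp
    have "a = b" using e by (cases a; cases b) presburger+
    then have "str_code s = str_code t'" using e by simp
    then show ?thesis using \<open>\<And>t. str_code s = str_code t \<Longrightarrow> s = t\<close> \<open>t = b # t'\<close> \<open>a = b\<close> by simp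
  qed
qed

lemma str_code_bounds: "2 ^ length s \<le> str_code s + 1 \<and> str_code s + 1 < 2 ^ Suc (length s)"
  by (induction s) auto

lemma tree_oracle_mem: "tree_oracle S (str_code s) = 1 \<longleftrightarrow> s \<in> S"
  unfolding tree_oracle_def using str_code_inj by auto

lemma tree_oracle_inj: "tree_oracle S = tree_oracle S' \<Longrightarrow> S = S'"
  using tree_oracle_mem by (metis subsetI subset_antisym)

section \<open>Counting\<close>

lemma card_len: "card {s :: bool list. length s = n} = 2 ^ n"
  using card_lists_length_eq[of "UNIV :: bool set" n] by simp

lemma fin_len: "finite {s :: bool list. length s = n}"
  using finite_lists_length_eq[of "UNIV :: bool set" n] by simp

lemma light_subset:
  fixes w :: "'a \<Rightarrow> nat"
  assumes "finite V" "c \<le> card V"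
  shows "\<exists>R\<subseteq>V. card R = c \<and> card V * sum w R \<le> c * sum w V"
  using assms
proof (induction "card V" arbitrary: V)
  case 0
  then show ?case by auto
next
  case (Suc k)
  show ?case
  proof (cases "c = card V")
    case True then show ?thesis by (intro exI[of _ V]) auto
  next
    case False
    have ne: "V \<noteq> {}" using Suc by auto
    have fi: "finite (w ` V)" using Suc.prems(1) by simp
    have "Max (w ` V) \<in> w ` V" using fi ne by (intro Max_in) auto
    then obtain x where x1: "x \<in> V" "w x = Max (w ` V)" by auto
    have x: "x \<in> V" "\<forall>y\<in>V. w y \<le> w x" using x1 fi by auto
    let ?V = "V - {x}"
    have cV: "card ?V = k" using Suc x by simp
    have "c \<le> card ?V" using Suc.prems False cV Suc.hyps by linarith
    then obtain R where R: "R \<subseteq> ?V" "card R = c" "card ?V * sum w R \<le> c * sum w ?V"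
      using Suc.hyps(1)[of ?V] cV Suc.prems by auto
    have sR: "sum w R \<le> c * w x"
    proof -
      have "sum w R \<le> sum (\<lambda>_. w x) R" using R(1) x by (intro sum_mono) auto
      then show ?thesis using R(2) by simp
    qed
    have sV: "sum w V = sum w ?V + w x" using Suc.prems x
      by (metis add.commute sum.remove)
    have "card V * sum w R = card ?V * sum w R + sum w R" using cV \<open>Suc k = card V\<close>[symmetric] by simp
    also have "\<dots> \<le> c * sum w ?V + c * w x" using R sR by linarith
    also have "\<dots> = c * sum w V" using sV by (simp add: algebra_simps)
    finally show ?thesis using R by blast
  qed
qed



lemma card_prefix_le:
  assumes "finite Bd" "\<forall>\<sigma>\<in>Bd. length \<sigma> = L" "L \<le> N"
  shows "card {s::bool list. length s = N \<and> take L s \<in> Bd} \<le> card Bd * 2 ^ (N - L)"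
proof -
  have "{s::bool list. length s = N \<and> take L s \<in> Bd} \<subseteq> (\<lambda>(a,b). a @ b) ` (Bd \<times> {b. length b = N - L})"
  proof
    fix s :: "bool list" assume s: "s \<in> {s. length s = N \<and> take L s \<in> Bd}"
    then have "s = (\<lambda>(a,b). a @ b) (take L s, drop L s)" by simp
    moreover have "(take L s, drop L s) \<in> Bd \<times> {b. length b = N - L}" using s by simp
    ultimately show "s \<in> (\<lambda>(a,b). a @ b) ` (Bd \<times> {b. length b = N - L})" by blast
  qed
  then have "card {s::bool list. length s = N \<and> take L s \<in> Bd} \<le> card ((\<lambda>(a,b). a @ b) ` (Bd \<times> {b::bool list. length b = N - L}))"
    by (intro card_mono finite_imageI finite_cartesian_product assms(1) fin_len)
  also have "\<dots> \<le> card (Bd \<times> {b::bool list. length b = N - L})" by (rule card_image_le) (intro finite_cartesian_product assms(1) fin_len)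
  also have "\<dots> = card Bd * 2 ^ (N - L)" by (simp add: card_cartesian_product card_len)
  finally show ?thesis .
qed

lemma card_prefix_ge:
  assumes "finite R" "\<forall>\<sigma>\<in>R. length \<sigma> = n" "n \<le> l"
  shows "card R * 2 ^ (l - n) \<le> card {s::bool list. length s = l \<and> take n s \<in> R}"
proof -
  have inj: "inj_on (\<lambda>(a,b). a @ b) (R \<times> {b::bool list. length b = l - n})"
  proof (rule inj_onI)
    fix x y assume "x \<in> R \<times> {b::bool list. length b = l - n}" "y \<in> R \<times> {b::bool list. length b = l - n}"
      "(\<lambda>(a,b). a @ b) x = (\<lambda>(a,b). a @ b) y"
    then show "x = y" using assms(2) by (cases x; cases y) auto
  qed
  have sub: "(\<lambda>(a,b). a @ b) ` (R \<times> {b::bool list. length b = l - n}) \<subseteq> {s::bool list. length s = l \<and> take n s \<in> R}"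
    using assms by auto
  have "card R * 2 ^ (l - n) = card (R \<times> {b::bool list. length b = l - n})"
    by (simp add: card_cartesian_product card_len)
  also have "\<dots> = card ((\<lambda>(a,b). a @ b) ` (R \<times> {b::bool list. length b = l - n}))"
    using card_image[OF inj] by simp
  also have "\<dots> \<le> card {s::bool list. length s = l \<and> take n s \<in> R}"
    by (rule card_mono[OF _ sub]) (rule finite_subset[OF _ fin_len[of l]], auto)
  finally show ?thesis .
qed

definition bitv :: "bool list \<Rightarrow> nat \<Rightarrow> nat" where
  "bitv \<sigma> k = (if \<sigma> ! k then 1 else 0)"

definition dec :: "recf \<Rightarrow> nat \<Rightarrow> bool list \<Rightarrow> bool" where
  "dec \<Psi> n \<sigma> \<longleftrightarrow> (\<forall>i<n. \<exists>y. \<forall>A' g. (\<forall>k<length \<sigma>. A' k = tree_oracle UNIV k \<and> g k = bitv \<sigma> k)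
      \<longrightarrow> eval (join A' g) \<Psi> [i] y)"

lemma dec_mono:
  assumes "dec \<Psi> n \<sigma>" "take (length \<sigma>) \<tau> = \<sigma>"
  shows "dec \<Psi> n \<tau>"
proof -
  have "min (length \<sigma>) (length \<tau>) = length \<sigma>" using arg_cong[OF assms(2), of length] by simp
  then have len: "length \<sigma> \<le> length \<tau>" by (simp add: min_def split: if_splits)
  have bit: "bitv \<tau> k = bitv \<sigma> k" if "k < length \<sigma>" for k
    using that assms(2) unfolding bitv_def by (metis nth_take)
  show ?thesis unfolding dec_def
  proof (intro allI impI)
    fix i assume "i < n"
    then obtain y where y: "\<forall>A' g. (\<forall>k<length \<sigma>. A' k = tree_oracle UNIV k \<and> g k = bitv \<sigma> k)
      \<longrightarrow> eval (join A' g) \<Psi> [i] y" using assms(1) unfolding dec_def by blast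
    show "\<exists>y. \<forall>A' g. (\<forall>k<length \<tau>. A' k = tree_oracle UNIV k \<and> g k = bitv \<tau> k) \<longrightarrow> eval (join A' g) \<Psi> [i] y"
    proof (intro exI allI impI)
      fix A' g assume a: "\<forall>k<length \<tau>. A' k = tree_oracle UNIV k \<and> g k = bitv \<tau> k"
      have "\<forall>k<length \<sigma>. A' k = tree_oracle UNIV k \<and> g k = bitv \<sigma> k" using a len bit by auto
      then show "eval (join A' g) \<Psi> [i] y" using y by blast
    qed
  qed
qed

lemma dec_path:
  assumes C: "computes \<Psi> (join (tree_oracle UNIV) (path_oracle f)) C"
  shows "\<exists>N. dec \<Psi> n (map f [0..<N])"
proof -
  let ?X = "join (tree_oracle UNIV) (path_oracle f)"
  have "\<forall>i<n. \<exists>N. good_bound ?X \<Psi> [i] (C i) N"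
    using C eval_use unfolding computes_def by blast
  then obtain N where N: "\<forall>i<n. good_bound ?X \<Psi> [i] (C i) N"
    using fin_bound[of n "\<lambda>i N. good_bound ?X \<Psi> [i] (C i) N"] good_bound_mono by blast
  have "dec \<Psi> n (map f [0..<N])" unfolding dec_def
  proof (intro allI impI exI)
    fix i A' g assume i: "i < n" and a: "\<forall>k<length (map f [0..<N]). A' k = tree_oracle UNIV k \<and> g k = bitv (map f [0..<N]) k"
    have "\<forall>j<N. join A' g j = ?X j"
    proof (intro allI impI)
      fix j assume "j < N"
      then have "j div 2 < N" by linarith
      then show "join A' g j = ?X j" using a unfolding join_def bitv_def path_oracle_def by simp
    qed
    then show "eval (join A' g) \<Psi> [i] (C i)" using N i unfolding good_bound_def by blast
  qed
  then show ?thesis by blast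
qed



lemma full_tree: "0 < p \<Longrightarrow> p < 1 \<Longrightarrow> wwkl_tree p UNIV"
  unfolding wwkl_tree_def is_tree_def using card_len by simp

lemma n_exists:
  fixes p q :: rat assumes "p < q" shows "\<exists>n::nat. 1 < (q - p) * 2 ^ n"
proof -
  obtain k :: nat where k: "1 / (q - p) < of_nat k" using reals_Archimedean2 by blast
  have "k < 2 ^ k" by (rule less_exp)
  then have "(of_nat k :: rat) < of_nat (2 ^ k)" by (simp only: of_nat_less_iff)
  then have "of_nat k < (2::rat) ^ k" by simp
  then have "1 / (q - p) < 2 ^ k" using k by linarith
  then have "1 < (q - p) * 2 ^ k" using assms by (simp add: field_simps)
  then show ?thesis by blast
qed

lemma c_facts:
  fixes p :: rat
  assumes "0 < p" "p < 1"
  shows "p * 2 ^ n \<le> of_nat (nat \<lceil>p * 2 ^ n\<rceil>) \<and> of_nat (nat \<lceil>p * 2 ^ n\<rceil>) < p * 2 ^ n + 1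
     \<and> nat \<lceil>p * 2 ^ n\<rceil> \<le> 2 ^ n"
proof -
  have pos: "0 < p * 2 ^ n" using assms by simp
  then have cz: "0 \<le> \<lceil>p * 2 ^ n\<rceil>" by (meson ceiling_correct less_le_trans not_le of_int_le_0_iff order_less_imp_le)
  have e: "(of_nat (nat \<lceil>p * 2 ^ n\<rceil>) :: rat) = of_int \<lceil>p * 2 ^ n\<rceil>" using cz by simp
  have "p * 2 ^ n \<le> 2 ^ n" using assms by simp
  then have "\<lceil>p * 2 ^ n\<rceil> \<le> 2 ^ n" by (simp add: ceiling_le_iff)
  then have "nat \<lceil>p * 2 ^ n\<rceil> \<le> 2 ^ n" by (simp add: nat_le_iff)
  then show ?thesis using e ceiling_correct[of "p * 2 ^ n"] by simp
qed

theorem proposition4p6: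
  fixes p q :: rat
  assumes "0 < p" and "p < q" and "q < 1"
  shows "\<not> weihrauch_le (qWWKL p) (qWWKL q)"
proof
  assume "weihrauch_le (qWWKL p) (qWWKL q)"
  then obtain \<Phi> \<Psi> where H: "\<forall>A \<in> fst (qWWKL p). \<exists>B. computes \<Phi> A B \<and> B \<in> fst (qWWKL q) \<and>
      (\<forall>T \<in> snd (qWWKL q) B. \<exists>C. computes \<Psi> (join A T) C \<and> C \<in> snd (qWWKL p) A)"
    unfolding weihrauch_le_def by blast
  define A0 where "A0 = tree_oracle (UNIV :: bool list set)"
  have "A0 \<in> fst (qWWKL p)" unfolding A0_def qWWKL_def using full_tree assms by auto
  then obtain B0 where B0: "computes \<Phi> A0 B0" "B0 \<in> fst (qWWKL q)"
    "\<forall>T \<in> snd (qWWKL q) B0. \<exists>C. computes \<Psi> (join A0 T) C \<and> C \<in> snd (qWWKL p) A0"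
    using H by blast
  obtain T0 where T0: "B0 = tree_oracle T0" "wwkl_tree q T0" using B0(2) unfolding qWWKL_def by auto
  have T0tree: "is_tree T0" using T0 unfolding wwkl_tree_def by simp
  have H0: "\<exists>C. computes \<Psi> (join A0 (path_oracle f)) C" if "is_path T0 f" for f
  proof -
    have "path_oracle f \<in> snd (qWWKL q) B0" unfolding qWWKL_def using T0 that by auto
    then show ?thesis using B0(3) by blast
  qed
  obtain n :: nat where n: "1 < (q - p) * 2 ^ n" using n_exists assms by blast
  \<comment> \<open>a level of T0 all of whose nodes decide the first n output bits\<close>
  have "\<exists>L. \<forall>\<sigma>\<in>T0. length \<sigma> = L \<longrightarrow> dec \<Psi> n \<sigma>"
  proof (rule ccontr)
    assume nL: "\<not> ?thesis"
    define U where "U = {\<sigma>\<in>T0. \<not> dec \<Psi> n \<sigma>}"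
    have "is_tree U" unfolding is_tree_def U_def
    proof (intro allI impI)
      fix s t assume st: "s @ t \<in> {\<sigma> \<in> T0. \<not> dec \<Psi> n \<sigma>}"
      then have "s \<in> T0" using T0tree unfolding is_tree_def by blast
      moreover have "\<not> dec \<Psi> n s" using st dec_mono[of \<Psi> n s "s @ t"] by auto
      ultimately show "s \<in> {\<sigma> \<in> T0. \<not> dec \<Psi> n \<sigma>}" by simp
    qed
    moreover have "\<forall>N. \<exists>s\<in>U. length s = N" using nL unfolding U_def by blast
    ultimately obtain f where f: "is_path U f" using koenig by blast
    then have "is_path T0 f" unfolding is_path_def U_def by blast
    then obtain C where "computes \<Psi> (join A0 (path_oracle f)) C" using H0 by blast
    then obtain N where "dec \<Psi> n (map f [0..<N])" using dec_path unfolding A0_def by blast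
    moreover have "map f [0..<N] \<in> U" using f unfolding is_path_def by blast
    ultimately show False unfolding U_def by blast
  qed
  then obtain L where L: "\<And>\<sigma>. \<sigma> \<in> T0 \<Longrightarrow> length \<sigma> = L \<Longrightarrow> dec \<Psi> n \<sigma>" by blast
  define ys where "ys \<sigma> i = (SOME y. \<forall>A' g. (\<forall>k<length \<sigma>. A' k = A0 k \<and> g k = bitv \<sigma> k)
      \<longrightarrow> eval (join A' g) \<Psi> [i] y)" for \<sigma> i
  have ys: "\<forall>A' g. (\<forall>k<length \<sigma>. A' k = A0 k \<and> g k = bitv \<sigma> k) \<longrightarrow> eval (join A' g) \<Psi> [i] (ys \<sigma> i)"
    if "dec \<Psi> n \<sigma>" "i < n" for \<sigma> i
  proof -
    have "\<exists>y. \<forall>A' g. (\<forall>k<length \<sigma>. A' k = A0 k \<and> g k = bitv \<sigma> k) \<longrightarrow> eval (join A' g) \<Psi> [i] y"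
      using that unfolding dec_def A0_def by blast
    then show ?thesis unfolding ys_def by (rule someI_ex)
  qed
  define tau where "tau \<sigma> = map (\<lambda>i. ys \<sigma> i = 1) [0..<n]" for \<sigma>
  have "\<forall>j<2 ^ Suc L. \<exists>N. good_bound A0 \<Phi> [j] (B0 j) N"
    using B0(1) eval_use unfolding computes_def by blast
  then obtain NP where NP: "\<forall>j<2 ^ Suc L. good_bound A0 \<Phi> [j] (B0 j) NP"
    using fin_bound[of "2 ^ Suc L" "\<lambda>j N. good_bound A0 \<Phi> [j] (B0 j) N"] good_bound_mono by blast
  define K where "K = max NP L"
  have PhiAgree: "B j = B0 j" if "\<forall>k<K. A k = A0 k" "computes \<Phi> A B" "j < 2 ^ Suc L" for A B j
  proof -
    have "\<forall>k<NP. A k = A0 k" using that(1) unfolding K_def by simp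
    then have "eval A \<Phi> [j] (B0 j)" using NP that(3) unfolding good_bound_def by blast
    moreover have "eval A \<Phi> [j] (B j)" using that(2) unfolding computes_def by blast
    ultimately show ?thesis using eval_det by blast
  qed
  define m where "m = K + n"
  have Km: "K < 2 ^ m"
  proof -
    have "K < 2 ^ K" by (rule less_exp)
    also have "(2::nat) ^ K \<le> 2 ^ m" unfolding m_def by (intro power_increasing) auto
    finally show ?thesis .
  qed
  have nm: "n \<le> m" unfolding m_def by simp
  have LK: "L \<le> K" unfolding K_def by simp
  define V where "V = {\<tau>::bool list. length \<tau> = n}"
  define T0L where "T0L = {\<sigma>\<in>T0. length \<sigma> = L}"
  have finT0L: "finite T0L" unfolding T0L_def by (rule finite_subset[OF _ fin_len[of L]]) auto
  have cardT0L: "card T0L \<le> 2 ^ L" unfolding T0L_def using card_mono[OF fin_len[of L], of "{\<sigma>\<in>T0. length \<sigma> = L}"] card_len[of L] by auto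
  have finV: "finite V" unfolding V_def by (rule fin_len)
  have tauV: "tau \<sigma> \<in> V" for \<sigma> unfolding V_def tau_def by simp
  define w where "w \<tau> = card {\<sigma>\<in>T0L. tau \<sigma> = \<tau>}" for \<tau>
  define c where "c = nat \<lceil>p * 2 ^ n\<rceil>"
  have cf: "p * 2 ^ n \<le> of_nat c" "of_nat c < p * 2 ^ n + 1" "c \<le> 2 ^ n"
    using c_facts[of p n] assms unfolding c_def by auto
  have "c \<le> card V" using cf(3) card_len unfolding V_def by simp
  then obtain R where R: "R \<subseteq> V" "card R = c" "card V * sum w R \<le> c * sum w V"
    using light_subset[OF finV] by blast
  have fibers: "sum w S = card {\<sigma>\<in>T0L. tau \<sigma> \<in> S}" if "S \<subseteq> V" for S
  proof -
    have finS: "finite S" using that finV finite_subset by blast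
    have "{\<sigma>\<in>T0L. tau \<sigma> \<in> S} = (\<Union>\<tau>\<in>S. {\<sigma>\<in>T0L. tau \<sigma> = \<tau>})" by auto
    then have "card {\<sigma>\<in>T0L. tau \<sigma> \<in> S} = (\<Sum>\<tau>\<in>S. card {\<sigma>\<in>T0L. tau \<sigma> = \<tau>})"
      using card_UN_disjoint[OF finS, of "\<lambda>\<tau>. {\<sigma>\<in>T0L. tau \<sigma> = \<tau>}"] finT0L by auto
    then show ?thesis unfolding w_def by simp
  qed
  define Bd where "Bd = {\<sigma>\<in>T0L. tau \<sigma> \<in> R}"
  have "sum w V = card T0L" using fibers[of V] tauV by simp
  moreover have "sum w R = card Bd" using fibers[OF R(1)] unfolding Bd_def by simp
  ultimately have keyBd: "2 ^ n * card Bd \<le> c * 2 ^ L"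
    using R(3) cardT0L card_len[of n] unfolding V_def by (metis le_trans mult_le_mono2)
  have Rlen: "\<forall>\<tau>\<in>R. length \<tau> = n" using R(1) unfolding V_def by auto
  have finR: "finite R" using R(1) finV finite_subset by blast
  define Aset where "Aset = {s::bool list. length s \<le> m \<or> take n s \<in> R}"
  have Atree: "is_tree Aset" unfolding is_tree_def Aset_def
  proof (intro allI impI)
    fix s t :: "bool list" assume st: "s @ t \<in> {s. length s \<le> m \<or> take n s \<in> R}"
    show "s \<in> {s. length s \<le> m \<or> take n s \<in> R}"
    proof (cases "length s \<le> m")
      case False
      then have "n \<le> length s" using nm by simp
      then have e: "take n (s @ t) = take n s" by simp
      have "\<not> length (s @ t) \<le> m" using False by simp
      then have "take n (s @ t) \<in> R" using st by blast
      then have "take n s \<in> R" by (simp only: e)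
      then show ?thesis by simp
    qed simp
  qed
  have Alevel: "p \<le> of_nat (card {s \<in> Aset. length s = l}) / 2 ^ l" for l
  proof (cases "l \<le> m")
    case True
    then have "{s \<in> Aset. length s = l} = {s. length s = l}" unfolding Aset_def by auto
    then show ?thesis using card_len[of l] assms by simp
  next
    case False
    then have "{s \<in> Aset. length s = l} = {s. length s = l \<and> take n s \<in> R}" unfolding Aset_def by auto
    moreover have "c * 2 ^ (l - n) \<le> card {s::bool list. length s = l \<and> take n s \<in> R}"
      using card_prefix_ge[OF finR Rlen, of l] False nm R(2) by simp
    ultimately have ge: "of_nat c * 2 ^ (l - n) \<le> (of_nat (card {s \<in> Aset. length s = l}) :: rat)"
      by (metis (mono_tags, lifting) of_nat_le_iff of_nat_mult of_nat_numeral of_nat_power)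
    have pw: "(2::rat) ^ n * 2 ^ (l - n) = 2 ^ l" using False nm by (simp flip: power_add)
    have "p * 2 ^ l = (p * 2 ^ n) * 2 ^ (l - n)" using pw by (simp add: algebra_simps)
    also have "\<dots> \<le> of_nat c * 2 ^ (l - n)" using cf(1) by (intro mult_right_mono) auto
    also have "\<dots> \<le> of_nat (card {s \<in> Aset. length s = l})" by (rule ge)
    finally show ?thesis by (simp add: pos_le_divide_eq)
  qed
  define A where "A = tree_oracle Aset"
  have "A \<in> fst (qWWKL p)" unfolding A_def qWWKL_def wwkl_tree_def using Atree Alevel by auto
  have Aagree: "\<forall>k<K. A k = A0 k"
  proof (intro allI impI)
    fix k assume k: "k < K"
    have "(\<exists>s\<in>Aset. k = str_code s) \<longleftrightarrow> (\<exists>s\<in>(UNIV::bool list set). k = str_code s)"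
    proof
      assume "\<exists>s\<in>UNIV. k = str_code s"
      then obtain s where s: "k = str_code s" by blast
      have "(2::nat) ^ length s < 2 ^ m" using str_code_bounds[of s] s k Km by linarith
      then have "length s \<le> m" by (simp add: power_strict_increasing_iff)
      then show "\<exists>s\<in>Aset. k = str_code s" using s unfolding Aset_def by blast
    qed blast
    then show "A k = A0 k" unfolding A_def A0_def tree_oracle_def by simp
  qed
  obtain B where B: "computes \<Phi> A B" "B \<in> fst (qWWKL q)"
    "\<forall>T \<in> snd (qWWKL q) B. \<exists>C. computes \<Psi> (join A T) C \<and> C \<in> snd (qWWKL p) A"
    using H \<open>A \<in> fst (qWWKL p)\<close> by blast
  obtain T where T: "B = tree_oracle T" "wwkl_tree q T" using B(2) unfolding qWWKL_def by auto
  have Ttree: "is_tree T" using T(2) unfolding wwkl_tree_def by simp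
  have TL: "s \<in> T \<longleftrightarrow> s \<in> T0" if "length s = L" for s
  proof -
    have "str_code s + 1 < 2 ^ Suc L" using str_code_bounds[of s] that by simp
    then have "str_code s < 2 ^ Suc L" by linarith
    then have "B (str_code s) = B0 (str_code s)" using PhiAgree[OF Aagree B(1)] by blast
    then show ?thesis using tree_oracle_mem T(1) T0(1) by metis
  qed
  define G where "G = {\<sigma>\<in>T0L. tau \<sigma> \<notin> R}"
  have finBd: "finite Bd" unfolding Bd_def using finT0L by simp
  have Bdlen: "\<forall>\<sigma>\<in>Bd. length \<sigma> = L" unfolding Bd_def T0L_def by simp
  have goodlev: "\<exists>s\<in>T. length s = N \<and> take L s \<in> G" if "L \<le> N" for N
  proof (rule ccontr)
    assume nn: "\<not> ?thesis"
    have sub: "{s \<in> T. length s = N} \<subseteq> {s. length s = N \<and> take L s \<in> Bd}"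
    proof
      fix s assume s: "s \<in> {s \<in> T. length s = N}"
      then have "take L s \<in> T" using tree_take[OF Ttree] by blast
      moreover have lt: "length (take L s) = L" using s that by simp
      ultimately have "take L s \<in> T0L" using TL unfolding T0L_def by blast
      moreover have "take L s \<notin> G" using nn s by blast
      ultimately have "take L s \<in> Bd" unfolding G_def Bd_def by blast
      then show "s \<in> {s. length s = N \<and> take L s \<in> Bd}" using s by simp
    qed
    have "card {s \<in> T. length s = N} \<le> card {s::bool list. length s = N \<and> take L s \<in> Bd}"
      by (rule card_mono[OF _ sub]) (rule finite_subset[OF _ fin_len[of N]], auto)
    also have "\<dots> \<le> card Bd * 2 ^ (N - L)" by (rule card_prefix_le[OF finBd Bdlen that])
    finally have cle: "card {s \<in> T. length s = N} \<le> card Bd * 2 ^ (N - L)" .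
    have "q \<le> of_nat (card {s \<in> T. length s = N}) / 2 ^ N" using T(2) unfolding wwkl_tree_def by blast
    then have q1: "q * 2 ^ N \<le> of_nat (card {s \<in> T. length s = N})" by (simp add: pos_le_divide_eq)
    have "(of_nat (card {s \<in> T. length s = N}) :: rat) \<le> of_nat (card Bd * 2 ^ (N - L))"
      using cle by (simp only: of_nat_le_iff)
    then have q2: "(of_nat (card {s \<in> T. length s = N}) :: rat) \<le> of_nat (card Bd) * 2 ^ (N - L)"
      by simp
    have "(of_nat (2 ^ n * card Bd) :: rat) \<le> of_nat (c * 2 ^ L)"
      using keyBd by (simp only: of_nat_le_iff)
    then have kb: "(2::rat) ^ n * of_nat (card Bd) \<le> of_nat c * 2 ^ L" by simp
    have pw: "(2::rat) ^ L * 2 ^ (N - L) = 2 ^ N" using that by (simp flip: power_add)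
    have "q * 2 ^ n * 2 ^ N = 2 ^ n * (q * 2 ^ N)" by (simp add: algebra_simps)
    also have "\<dots> \<le> 2 ^ n * (of_nat (card Bd) * 2 ^ (N - L))" using q1 q2 by (intro mult_left_mono) auto
    also have "\<dots> = (2 ^ n * of_nat (card Bd)) * 2 ^ (N - L)" by (simp add: algebra_simps)
    also have "\<dots> \<le> (of_nat c * 2 ^ L) * 2 ^ (N - L)" using kb by (intro mult_right_mono) auto
    also have "\<dots> = of_nat c * 2 ^ N" using pw by (simp add: algebra_simps)
    finally have "q * 2 ^ n * 2 ^ N \<le> of_nat c * 2 ^ N" .
    then have "q * 2 ^ n \<le> of_nat c" by simp
    then have "(q - p) * 2 ^ n < 1" using cf(2) by (simp add: algebra_simps)
    then show False using n by simp
  qed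
  define U where "U = {s\<in>T. (\<exists>\<sigma>\<in>G. take (length s) \<sigma> = s) \<or> take L s \<in> G}"
  have GL: "length \<sigma> = L" if "\<sigma> \<in> G" for \<sigma> using that unfolding G_def T0L_def by simp
  have Utree: "is_tree U" unfolding is_tree_def
  proof (intro allI impI)
    fix s t assume st: "s @ t \<in> U"
    then have sT: "s \<in> T" using Ttree unfolding U_def is_tree_def by blast
    from st have "(\<exists>\<sigma>\<in>G. take (length (s @ t)) \<sigma> = s @ t) \<or> take L (s @ t) \<in> G" unfolding U_def by blast
    then have "(\<exists>\<sigma>\<in>G. take (length s) \<sigma> = s) \<or> take L s \<in> G"
    proof
      assume "\<exists>\<sigma>\<in>G. take (length (s @ t)) \<sigma> = s @ t"
      then obtain \<sigma> where "\<sigma> \<in> G" and ee: "take (length (s @ t)) \<sigma> = s @ t" by blast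
      have "take (length s) \<sigma> = take (length s) (take (length (s @ t)) \<sigma>)" by (simp add: min_def)
      also have "\<dots> = s" by (simp only: ee) simp
      finally have "take (length s) \<sigma> = s" .
      then show ?thesis using \<open>\<sigma> \<in> G\<close> by blast
    next
      assume a: "take L (s @ t) \<in> G"
      show ?thesis
      proof (cases "L \<le> length s")
        case True
        then have e2: "take L (s @ t) = take L s" by simp
        have "take L s \<in> G" using a by (simp only: e2)
        then show ?thesis by blast
      next
        case False
        then have "take (length s) (take L (s @ t)) = s" by (simp add: min_def)
        then show ?thesis using a by blast
      qed
    qed
    then show "s \<in> U" using sT unfolding U_def by blast
  qed
  have Uall: "\<forall>N. \<exists>s\<in>U. length s = N"
  proof
    fix N
    obtain s where s: "s \<in> T" "length s = max N L" "take L s \<in> G" using goodlev[of "max N L"] by auto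
    have "take N s \<in> T" using tree_take[OF Ttree s(1)] .
    moreover have "length (take N s) = N" using s(2) by simp
    moreover have "(\<exists>\<sigma>\<in>G. take (length (take N s)) \<sigma> = take N s) \<or> take L (take N s) \<in> G"
    proof (cases "N \<le> L")
      case True
      then have "take (length (take N s)) (take L s) = take N s" using s(2) by (simp add: min_def)
      then show ?thesis using s(3) by blast
    next
      case False
      then show ?thesis using s(3) by (simp add: min_def)
    qed
    ultimately show "\<exists>s\<in>U. length s = N" unfolding U_def by blast
  qed
  obtain f where f: "is_path U f" using koenig[OF Utree Uall] by blast
  define \<sigma>0 where "\<sigma>0 = map f [0..<L]"
  have fT: "is_path T f" using f unfolding is_path_def U_def by blast
  have "\<sigma>0 \<in> U" using f unfolding is_path_def \<sigma>0_def by blast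
  then have "\<sigma>0 \<in> G"
  proof -
    have l0: "length \<sigma>0 = L" unfolding \<sigma>0_def by simp
    from \<open>\<sigma>0 \<in> U\<close> have "(\<exists>\<sigma>\<in>G. take (length \<sigma>0) \<sigma> = \<sigma>0) \<or> take L \<sigma>0 \<in> G" unfolding U_def by blast
    then show ?thesis
    proof
      assume "\<exists>\<sigma>\<in>G. take (length \<sigma>0) \<sigma> = \<sigma>0"
      then obtain \<sigma> where "\<sigma> \<in> G" "take (length \<sigma>0) \<sigma> = \<sigma>0" by blast
      then have "\<sigma> = \<sigma>0" using GL l0 by simp
      then show ?thesis using \<open>\<sigma> \<in> G\<close> by simp
    qed (simp add: l0)
  qed
  then have s0: "\<sigma>0 \<in> T0" "length \<sigma>0 = L" "tau \<sigma>0 \<notin> R" unfolding G_def T0L_def by auto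
  have d0: "dec \<Psi> n \<sigma>0" using L s0 by blast
  have "path_oracle f \<in> snd (qWWKL q) B" unfolding qWWKL_def using T fT by auto
  then obtain C where C: "computes \<Psi> (join A (path_oracle f)) C" "C \<in> snd (qWWKL p) A" using B(3) by blast
  then obtain f' T' where f': "C = path_oracle f'" "A = tree_oracle T'" "is_path T' f'"
    unfolding qWWKL_def by auto
  have "T' = Aset" using f'(2) tree_oracle_inj unfolding A_def by metis
  have agr: "\<forall>k<length \<sigma>0. A k = A0 k \<and> path_oracle f k = bitv \<sigma>0 k"
    using Aagree LK s0(2) unfolding \<sigma>0_def bitv_def path_oracle_def by auto
  have Ci: "C i = ys \<sigma>0 i" if "i < n" for i
  proof -
    have "eval (join A (path_oracle f)) \<Psi> [i] (ys \<sigma>0 i)" using ys[OF d0 that] agr by blast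
    moreover have "eval (join A (path_oracle f)) \<Psi> [i] (C i)" using C(1) unfolding computes_def by blast
    ultimately show ?thesis using eval_det by blast
  qed
  have fi: "f' i = (ys \<sigma>0 i = 1)" if "i < n" for i
  proof -
    have "C i = (if f' i then 1 else 0)" using f'(1) unfolding path_oracle_def by simp
    then show ?thesis using Ci[OF that] by (cases "f' i") auto
  qed
  have mf: "map f' [0..<n] = tau \<sigma>0"
    unfolding tau_def by (rule map_cong) (auto simp: fi)
  have "map f' [0..<Suc m] \<in> Aset" using f'(3) \<open>T' = Aset\<close> unfolding is_path_def by blast
  moreover have "take n (map f' [0..<Suc m]) = map f' [0..<n]" using nm by (simp add: take_map)
  ultimately have "tau \<sigma>0 \<in> R" using mf unfolding Aset_def by simp
  then show False using s0(3) by blast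
qed
end
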